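(* For any weighted finite graph $G$ with $N$ vertices and each $1\leq k\leq N$, \[ \lambda_{N-k+1}\geq 2\overline{h}^*(k). \]
   Context: $G=(V,E,w)$ is a finite undirected graph without self-loops, $N=|V|$, positive symmetric edge weights $w_{uv}$ ($w_{uv}=0$ for non-edges), degrees $d_u=\sum_v w_{uv}$ (implicitly positive). $|E(A,B)|:=\sum_{u\in A,v\in B}w_{uv}$, $\mathrm{vol}(A):=\sum_{u\in A}d_u$. The normalized Laplacian $\Delta f(u)=\frac{1}{d_u}\sum_v w_{uv}(f(u)-f(v))$ has eigenvalues (with multiplicity) $0=\lambda_1\leq\cdots\leq\lambda_N\leq 2$. A $k$-sub-bipartition is a collection of $k$ pairs $(V_1,V_2),\ldots,(V_{2k-1},V_{2k})$ of pairwise disjoint subsets of $V$ with $V_{2i-1}\cup V_{2i}\neq\emptyset$ for each $i$; for it set $V^*:=V\setminus\bigcup_{i=1}^k(V_{2i-1}\cup V_{2i})$. Define \[ \overline{h}^*(k):=\max\min_{1\leq i\leq k}\frac{2|E(V_{2i-1},V_{2i})|+\frac12|E(V_{2i-1}\cup V_{2i},V^* )|}{\mathrm{vol}(V_{2i-1}\cup V_{2i})}, \] the maximum over all $k$-sub-bipartitions. *)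

theory Defs
  imports "Jordan_Normal_Form.Char_Poly"
begin

(* Weighted graph on vertex set {0..<N}, weights w :: nat => nat => real
   (w u v = 0 means no edge). *)

definition deg :: "nat \<Rightarrow> (nat \<Rightarrow> nat \<Rightarrow> real) \<Rightarrow> nat \<Rightarrow> real" where
  "deg N w u = (\<Sum>v<N. w u v)"

definition Ew :: "(nat \<Rightarrow> nat \<Rightarrow> real) \<Rightarrow> nat set \<Rightarrow> nat set \<Rightarrow> real" where
  "Ew w A B = (\<Sum>u\<in>A. \<Sum>v\<in>B. w u v)"

definition vol :: "nat \<Rightarrow> (nat \<Rightarrow> nat \<Rightarrow> real) \<Rightarrow> nat set \<Rightarrow> real" where
  "vol N w A = (\<Sum>u\<in>A. deg N w u)"

(* matrix of the normalized Laplacian  (\<Delta> f)(u) = (1/d_u) \<Sum>_v w_uv (f u - f v) *)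
definition norm_lap :: "nat \<Rightarrow> (nat \<Rightarrow> nat \<Rightarrow> real) \<Rightarrow> real mat" where
  "norm_lap N w = mat N N (\<lambda>(i,j). (if i = j then 1 else 0) - w i j / deg N w i)"

(* eigenvalues with multiplicity, in nondecreasing order: lap_eigs N w ! (j-1) = \<lambda>_j *)
definition lap_eigs :: "nat \<Rightarrow> (nat \<Rightarrow> nat \<Rightarrow> real) \<Rightarrow> real list" where
  "lap_eigs N w = (THE ls. length ls = N \<and> sorted ls \<and>
      char_poly (norm_lap N w) = (\<Prod>a\<leftarrow>ls. [:- a, 1:]))"

definition sub_bipartition :: "nat \<Rightarrow> nat \<Rightarrow> (nat \<Rightarrow> nat set) \<Rightarrow> (nat \<Rightarrow> nat set) \<Rightarrow> bool" where
  "sub_bipartition N k A B \<longleftrightarrow>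
     (\<forall>i<k. A i \<subseteq> {..<N} \<and> B i \<subseteq> {..<N} \<and> A i \<union> B i \<noteq> {} \<and> A i \<inter> B i = {}) \<and>
     (\<forall>i<k. \<forall>j<k. i \<noteq> j \<longrightarrow> (A i \<union> B i) \<inter> (A j \<union> B j) = {})"

definition rest_set :: "nat \<Rightarrow> nat \<Rightarrow> (nat \<Rightarrow> nat set) \<Rightarrow> (nat \<Rightarrow> nat set) \<Rightarrow> nat set" where
  "rest_set N k A B = {..<N} - (\<Union>i<k. A i \<union> B i)"

definition bip_ratio :: "nat \<Rightarrow> (nat \<Rightarrow> nat \<Rightarrow> real) \<Rightarrow> nat \<Rightarrow> (nat \<Rightarrow> nat set) \<Rightarrow> (nat \<Rightarrow> nat set) \<Rightarrow> nat \<Rightarrow> real" where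
  "bip_ratio N w k A B i =
     (2 * Ew w (A i) (B i) + (1/2) * Ew w (A i \<union> B i) (rest_set N k A B)) / vol N w (A i \<union> B i)"

definition hbar_star :: "nat \<Rightarrow> (nat \<Rightarrow> nat \<Rightarrow> real) \<Rightarrow> nat \<Rightarrow> real" where
  "hbar_star N w k = Max {Min (bip_ratio N w k A B ` {..<k}) | A B. sub_bipartition N k A B}"

end

theory Submission
  imports Defs "Jordan_Normal_Form.Schur_Decomposition"
begin

lemma order_prod_lin: "Polynomial.order a (\<Prod>b\<leftarrow>ls. [:- b, 1:]) = count (mset ls) (a::'a::idom)"
proof (induction ls)
  case Nil then show ?case by simp
next
  case (Cons b ls)
  have nz: "(\<Prod>b\<leftarrow>ls. [:- b, 1:]) \<noteq> (0::'a poly)"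
    by (auto simp add: prod_list_zero_iff)
  have "Polynomial.order a ([:- b, 1:] * (\<Prod>b\<leftarrow>ls. [:- b, 1:])) = Polynomial.order a [:- b, 1:] + Polynomial.order a (\<Prod>b\<leftarrow>ls. [:- b, 1:])"
    by (rule order_mult) (metis nz mult_eq_0_iff pCons_eq_0_iff one_neq_zero)
  moreover have "Polynomial.order a [:- b, 1:] = (if a = b then 1 else 0)"
  proof (cases "a = b")
    case True then show ?thesis using order_power_n_n[of a 1] by simp
  next
    case False then show ?thesis by (simp add: order_0I)
  qed
  ultimately show ?case using Cons by simp
qed

lemma sorted_lin_unique:
  fixes xs ys :: "real list" assumes "sorted xs" "sorted ys" "(\<Prod>b\<leftarrow>xs. [:- b, 1:]) = (\<Prod>b\<leftarrow>ys. [:- b, 1:])"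
  shows "xs = ys"
proof -
  have "mset xs = mset ys"
    using order_prod_lin[of _ xs] order_prod_lin[of _ ys] assms(3) by (metis multiset_eqI)
  then show ?thesis using assms by (metis properties_for_sort sorted_sort_id)
qed

lemma herm_real:
  fixes A :: "real mat" and v :: "complex vec" and a :: complex
  assumes A: "A \<in> carrier_mat n n"
    and sym: "\<And>i j. i < n \<Longrightarrow> j < n \<Longrightarrow> A $$ (i,j) = A $$ (j,i)"
    and v: "v \<in> carrier_vec n" and v0: "v \<noteq> 0\<^sub>v n"
    and ev: "map_mat complex_of_real A *\<^sub>v v = a \<cdot>\<^sub>v v"
  shows "Im a = 0"
proof -
  have eq: "(\<Sum>j<n. complex_of_real (A $$ (i,j)) * v $ j) = a * v $ i" if i: "i < n" for i
  proof -
    have "(map_mat complex_of_real A *\<^sub>v v) $ i = (a \<cdot>\<^sub>v v) $ i" using ev by simp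
    then show ?thesis using A v i
      by (simp add: scalar_prod_def lessThan_atLeast0 mult.commute)
  qed
  define T where "T = (\<Sum>i<n. cnj (v $ i) * (\<Sum>j<n. complex_of_real (A $$ (i,j)) * v $ j))"
  have T1: "T = a * (\<Sum>i<n. cnj (v $ i) * v $ i)"
  proof -
    have "T = (\<Sum>i<n. cnj (v $ i) * (a * v $ i))" unfolding T_def by (rule sum.cong) (simp_all add: eq)
    then show ?thesis by (simp add: sum_distrib_left mult.commute mult.left_commute)
  qed
  have "cnj T = (\<Sum>i<n. \<Sum>j<n. v $ i * (complex_of_real (A $$ (i,j)) * cnj (v $ j)))"
    unfolding T_def by (simp add: sum_distrib_left)
  also have "\<dots> = (\<Sum>j<n. \<Sum>i<n. v $ i * (complex_of_real (A $$ (i,j)) * cnj (v $ j)))"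
    by (rule sum.swap)
  also have "\<dots> = T"
    unfolding T_def by (auto simp: sum_distrib_left sym intro!: sum.cong)
  finally have cT: "cnj T = T" .
  obtain i0 where i0: "i0 < n" "v $ i0 \<noteq> 0"
    using v0 v by (metis eq_vecI carrier_vecD index_zero_vec(1) index_zero_vec(2))
  define r where "r = (\<Sum>i<n. (cmod (v $ i))^2)"
  have rs: "(\<Sum>i<n. cnj (v $ i) * v $ i) = complex_of_real r"
    unfolding r_def of_real_sum by (rule sum.cong[OF refl]) (subst complex_norm_square, simp add: mult.commute)
  have "(cmod (v $ i0))^2 > 0" using i0 by simp
  moreover have "(cmod (v $ i0))^2 \<le> r" unfolding r_def
    by (rule member_le_sum) (use i0 in auto)
  ultimately have rpos: "r > 0" by linarith
  have "a = T / complex_of_real r" using T1 rs rpos by simp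
  then have "cnj a = a" using cT by simp
  then show ?thesis by (metis Reals_cnj_iff complex_is_Real_iff)
qed

lemma sym_real_split:
  fixes A :: "real mat"
  assumes A: "A \<in> carrier_mat n n"
    and sym: "\<And>i j. i < n \<Longrightarrow> j < n \<Longrightarrow> A $$ (i,j) = A $$ (j,i)"
  shows "\<exists>rs. char_poly A = (\<Prod>r\<leftarrow>rs. [:- r, 1:]) \<and> sorted rs \<and> length rs = n"
proof -
  let ?AC = "map_mat complex_of_real A"
  have AC: "?AC \<in> carrier_mat n n" using A by simp
  obtain as where cf: "char_poly ?AC = (\<Prod>a\<leftarrow>as. [:- a, 1:])" and len: "length as = n"
    using char_poly_factorized[OF AC] by blast
  have re: "Im a = 0" if a: "a \<in> set as" for a
  proof -
    have "poly (char_poly ?AC) a = 0" unfolding cf poly_prod_list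
      using a by (auto simp: prod_list_zero_iff)
    then have "eigenvalue ?AC a" using eigenvalue_root_char_poly[OF AC] by simp
    then obtain v where "eigenvector ?AC v a" unfolding eigenvalue_def by blast
    then have v: "v \<in> carrier_vec n" "v \<noteq> 0\<^sub>v n" "?AC *\<^sub>v v = a \<cdot>\<^sub>v v"
      unfolding eigenvector_def using A by auto
    show ?thesis by (rule herm_real[OF A sym v]) auto
  qed
  define rs0 where "rs0 = map Re as"
  have asr: "as = map complex_of_real rs0"
  proof -
    have "map complex_of_real (map Re as) = map (\<lambda>x. x) as"
      unfolding map_map by (rule map_cong[OF refl]) (use re complex_eqI in auto)
    then show ?thesis unfolding rs0_def by simp
  qed
  interpret mh: map_poly_inj_idom_hom complex_of_real ..
  have "map_poly complex_of_real (char_poly A) = char_poly ?AC"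
    by (rule of_real_hom.char_poly_hom[OF A, symmetric])
  also have "\<dots> = map_poly complex_of_real (\<Prod>r\<leftarrow>rs0. [:- r, 1:])"
    unfolding cf asr
  proof (induction rs0)
    case Nil then show ?case by simp
  next
    case (Cons r rs)
    have "map_poly complex_of_real [:- r, 1:] = [:- complex_of_real r, 1:]" by simp
    then show ?case using Cons by (simp only: list.map prod_list.Cons mh.hom_mult)
  qed
  finally have cp: "char_poly A = (\<Prod>r\<leftarrow>rs0. [:- r, 1:])" by simp
  have "(\<Prod>r\<leftarrow>rs0. [:- r, 1:]) = (\<Prod>r\<leftarrow>sort rs0. [:- r, 1:])"
    by (simp flip: prod_mset_prod_list)
  moreover have "length rs0 = n" using len rs0_def by simp
  ultimately show ?thesis using cp by (intro exI[of _ "sort rs0"]) auto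
qed

definition ipr :: "nat \<Rightarrow> (nat \<Rightarrow> real) \<Rightarrow> (nat \<Rightarrow> real) \<Rightarrow> real" where
  "ipr n x y = (\<Sum>i<n. x i * y i)"

lemma sum_one:
  assumes "finite S" "x \<in> S" "\<And>y. y \<in> S \<Longrightarrow> y \<noteq> x \<Longrightarrow> f y = 0"
  shows "sum f S = f x"
proof -
  have "sum f S = f x + sum f (S - {x})" using assms by (simp add: sum.remove)
  also have "sum f (S - {x}) = 0" using assms by (intro sum.neutral) auto
  finally show ?thesis by simp
qed

lemma sum_trunc:
  fixes J n :: nat and f :: "nat \<Rightarrow> 'a::comm_monoid_add"
  assumes "J < n" "\<And>r. r < n \<Longrightarrow> J < r \<Longrightarrow> f r = 0"
  shows "(\<Sum>r<n. f r) = (\<Sum>r<J. f r) + f J"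
proof -
  have "(\<Sum>r<n. f r) = (\<Sum>r<Suc J. f r)"
    by (rule sum.mono_neutral_right) (use assms in auto)
  then show ?thesis by simp
qed

lemma ipr_pos:
  fixes x :: "nat \<Rightarrow> real"
  assumes "i < n" "x i \<noteq> 0" shows "ipr n x x > 0"
proof -
  have "x i * x i > 0" using assms by (simp add: zero_less_mult_iff linorder_neq_iff disj_commute)
  moreover have "x i * x i \<le> ipr n x x" unfolding ipr_def
    by (rule member_le_sum) (use assms in auto)
  ultimately show ?thesis by linarith
qed

lemma ipr_comm: "ipr n x y = ipr n y x" unfolding ipr_def by (simp add: mult.commute)

definition gsinv where
  "gsinv n (a::nat\<Rightarrow>nat\<Rightarrow>real) (p::nat\<Rightarrow>nat\<Rightarrow>real) (b::nat\<Rightarrow>nat\<Rightarrow>real) J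
     (W::nat\<Rightarrow>nat\<Rightarrow>real) (ca::nat\<Rightarrow>nat\<Rightarrow>real) (cb::nat\<Rightarrow>nat\<Rightarrow>real) \<longleftrightarrow>
  (\<forall>j<J. \<forall>i<n. W j i = (\<Sum>m<n. ca j m * p i m)) \<and>
  (\<forall>j<J. ca j j = 1) \<and> (\<forall>j<J. \<forall>m. j < m \<longrightarrow> ca j m = 0) \<and>
  (\<forall>j<J. \<forall>i<n. p i j = (\<Sum>r<n. cb j r * W r i)) \<and> (\<forall>j<J. \<forall>r. j < r \<longrightarrow> cb j r = 0) \<and>
  (\<forall>j<J. \<forall>l<J. j \<noteq> l \<longrightarrow> ipr n (W j) (W l) = 0) \<and>
  (\<forall>j<J. ipr n (W j) (W j) > 0) \<and>
  (\<forall>j<J. \<forall>i<n. (\<Sum>l<n. a i l * W j l) = b j j * W j i)"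

lemma gs_step:
  fixes a p b q :: "nat \<Rightarrow> nat \<Rightarrow> real"
  assumes sym: "\<And>i j. i < n \<Longrightarrow> j < n \<Longrightarrow> a i j = a j i"
    and AP: "\<And>i j. i < n \<Longrightarrow> j < n \<Longrightarrow> (\<Sum>l<n. a i l * p l j) = (\<Sum>m<n. p i m * b m j)"
    and ut: "\<And>m j. j < m \<Longrightarrow> m < n \<Longrightarrow> b m j = 0"
    and QP: "\<And>i j. i < n \<Longrightarrow> j < n \<Longrightarrow> (\<Sum>m<n. q i m * p m j) = (if i = j then 1 else 0)"
    and J: "J < n"
    and inv: "gsinv n a p b J W ca cb"
  shows "\<exists>W' ca' cb'. gsinv n a p b (Suc J) W' ca' cb'"
proof -
  note I = inv[unfolded gsinv_def]
  have Wrep: "\<And>j i. j < J \<Longrightarrow> i < n \<Longrightarrow> W j i = (\<Sum>m<n. ca j m * p i m)" using I[THEN conjunct1] by blast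
  have ca1: "\<And>j. j < J \<Longrightarrow> ca j j = 1" using I[THEN conjunct2, THEN conjunct1] by blast
  have ca0: "\<And>j m. j < J \<Longrightarrow> j < m \<Longrightarrow> ca j m = 0" using I[THEN conjunct2, THEN conjunct2, THEN conjunct1] by blast
  have prep: "\<And>j i. j < J \<Longrightarrow> i < n \<Longrightarrow> p i j = (\<Sum>r<n. cb j r * W r i)" using I[THEN conjunct2, THEN conjunct2, THEN conjunct2, THEN conjunct1] by blast
  have cb0: "\<And>j r. j < J \<Longrightarrow> j < r \<Longrightarrow> cb j r = 0" using I[THEN conjunct2, THEN conjunct2, THEN conjunct2, THEN conjunct2, THEN conjunct1] by blast
  have orth: "\<And>j l. j < J \<Longrightarrow> l < J \<Longrightarrow> j \<noteq> l \<Longrightarrow> ipr n (W j) (W l) = 0" using I[THEN conjunct2, THEN conjunct2, THEN conjunct2, THEN conjunct2, THEN conjunct2, THEN conjunct1] by blast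
  have pos: "\<And>j. j < J \<Longrightarrow> ipr n (W j) (W j) > 0" using I[THEN conjunct2, THEN conjunct2, THEN conjunct2, THEN conjunct2, THEN conjunct2, THEN conjunct2, THEN conjunct1] by blast
  have eig: "\<And>j i. j < J \<Longrightarrow> i < n \<Longrightarrow> (\<Sum>l<n. a i l * W j l) = b j j * W j i" using I[THEN conjunct2, THEN conjunct2, THEN conjunct2, THEN conjunct2, THEN conjunct2, THEN conjunct2, THEN conjunct2] by blast
  define co where "co l = ipr n (\<lambda>i. p i J) (W l) / ipr n (W l) (W l)" for l
  define Wn where "Wn i = p i J - (\<Sum>l<J. co l * W l i)" for i
  define can where "can m = (if m = J then 1 else 0) - (\<Sum>l<J. co l * ca l m)" for m
  define cbn where "cbn r = (if r = J then 1 else if r < J then co r else 0)" for r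
  define W' where "W' = W(J := Wn)"
  define ca' where "ca' = ca(J := can)"
  define cb' where "cb' = cb(J := cbn)"
  have W'J: "W' J = Wn" and W'o: "\<And>j. j \<noteq> J \<Longrightarrow> W' j = W j" unfolding W'_def by auto
  have a1: "Wn i = (\<Sum>m<n. can m * p i m)" if i: "i < n" for i
  proof -
    have "(\<Sum>m<n. can m * p i m) = (\<Sum>m<n. (if m = J then 1 else 0) * p i m) - (\<Sum>m<n. \<Sum>l<J. co l * (ca l m * p i m))"
      unfolding can_def by (simp add: left_diff_distrib sum_subtractf sum_distrib_right mult.assoc)
    also have "(\<Sum>m<n. (if m = J then 1 else 0) * p i m) = p i J" using J by (subst sum_one[where x=J]) auto
    also have "(\<Sum>m<n. \<Sum>l<J. co l * (ca l m * p i m)) = (\<Sum>l<J. co l * W l i)"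
      by (subst sum.swap) (simp add: sum_distrib_left[symmetric] Wrep i)
    finally show ?thesis unfolding Wn_def by simp
  qed
  have a2: "can J = 1" unfolding can_def using ca0 by simp
  have a3: "\<And>m. J < m \<Longrightarrow> can m = 0" unfolding can_def using ca0 by simp
  have b1: "p i J = (\<Sum>r<n. cbn r * W' r i)" if i: "i < n" for i
  proof -
    have "(\<Sum>r<n. cbn r * W' r i) = (\<Sum>r<J. cbn r * W' r i) + cbn J * W' J i"
      by (rule sum_trunc[OF J]) (simp add: cbn_def)
    also have "(\<Sum>r<J. cbn r * W' r i) = (\<Sum>r<J. co r * W r i)"
      by (rule sum.cong) (auto simp: cbn_def W'o)
    finally show ?thesis by (simp add: W'J cbn_def Wn_def)
  qed
  have b2: "\<And>r. J < r \<Longrightarrow> cbn r = 0" unfolding cbn_def by simp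
  have c: "ipr n Wn (W l) = 0" if l: "l < J" for l
  proof -
    have "ipr n Wn (W l) = ipr n (\<lambda>i. p i J) (W l) - (\<Sum>l'<J. co l' * ipr n (W l') (W l))"
      unfolding ipr_def Wn_def
      by (simp add: left_diff_distrib sum_subtractf sum_distrib_right sum_distrib_left mult.assoc)
        (subst sum.swap, simp)
    also have "(\<Sum>l'<J. co l' * ipr n (W l') (W l)) = co l * ipr n (W l) (W l)"
      by (rule sum_one) (use l orth in auto)
    also have "co l * ipr n (W l) (W l) = ipr n (\<lambda>i. p i J) (W l)"
      unfolding co_def using pos[OF l] by simp
    finally show ?thesis by simp
  qed
  have d: "ipr n Wn Wn > 0"
  proof -
    have "\<exists>i<n. Wn i \<noteq> 0"
    proof (rule ccontr)
      assume "\<not> ?thesis"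
      then have z: "\<And>i. i < n \<Longrightarrow> (\<Sum>m<n. p i m * can m) = 0" using a1 by (simp add: mult.commute)
      have "can J = (\<Sum>m<n. (if J = m then 1 else 0) * can m)" using J by (subst sum_one[where x=J]) auto
      also have "\<dots> = (\<Sum>m<n. (\<Sum>i<n. q J i * p i m) * can m)"
        by (rule sum.cong) (simp_all add: QP J)
      also have "\<dots> = (\<Sum>i<n. q J i * (\<Sum>m<n. p i m * can m))"
        by (simp add: sum_distrib_left sum_distrib_right mult.assoc) (subst sum.swap, simp)
      also have "\<dots> = 0" by (simp add: z)
      finally show False using a2 by simp
    qed
    then obtain i where "i < n" "Wn i \<noteq> 0" by blast
    then show ?thesis by (rule ipr_pos)
  qed
  define d where "d m2 = (\<Sum>m<n. can m * b m2 m)" for m2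
  have e1: "(\<Sum>l<n. a i l * Wn l) = (\<Sum>m2<n. p i m2 * d m2)" if i: "i < n" for i
  proof -
    have "(\<Sum>l<n. a i l * Wn l) = (\<Sum>l<n. \<Sum>m<n. can m * (a i l * p l m))"
      by (rule sum.cong) (simp_all add: a1 sum_distrib_left mult.left_commute)
    also have "\<dots> = (\<Sum>m<n. can m * (\<Sum>l<n. a i l * p l m))"
      by (subst sum.swap) (simp add: sum_distrib_left)
    also have "\<dots> = (\<Sum>m<n. can m * (\<Sum>m2<n. p i m2 * b m2 m))"
      by (rule sum.cong) (simp_all add: AP i)
    also have "\<dots> = (\<Sum>m2<n. p i m2 * d m2)"
      unfolding d_def by (simp add: sum_distrib_left mult.left_commute) (subst sum.swap, simp)
    finally show ?thesis .
  qed
  have d0: "d m2 = 0" if "m2 < n" "J < m2" for m2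
  unfolding d_def
  proof (rule sum.neutral, rule ballI)
    fix m assume "m \<in> {..<n}"
    show "can m * b m2 m = 0"
    proof (cases "J < m")
      case True then show ?thesis using a3 by simp
    next
      case False then have "m < m2" using that by simp
      then show ?thesis using ut that by simp
    qed
  qed
  have dJ: "d J = b J J"
    unfolding d_def by (subst sum_one[where x=J]) (use J a2 a3 ut in \<open>auto simp: nat_neq_iff\<close>)
  have prep': "p i m2 = (\<Sum>r<n. cb' m2 r * W' r i)" if "m2 \<le> J" "i < n" for m2 i
  proof (cases "m2 = J")
    case True then show ?thesis using b1 that by (simp add: cb'_def)
  next
    case False
    then have m2: "m2 < J" using that by simp
    have "p i m2 = (\<Sum>r<n. cb m2 r * W r i)" using prep m2 that by simp
    also have "\<dots> = (\<Sum>r<n. cb' m2 r * W' r i)"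
    proof (rule sum.cong)
      fix r assume "r \<in> {..<n}"
      show "cb m2 r * W r i = cb' m2 r * W' r i"
        by (cases "r = J") (use m2 cb0 in \<open>auto simp: cb'_def W'o\<close>)
    qed simp
    finally show ?thesis .
  qed
  define e where "e r = (\<Sum>m2<n. d m2 * cb' m2 r)" for r
  have e2: "(\<Sum>m2<n. p i m2 * d m2) = (\<Sum>r<n. e r * W' r i)" if i: "i < n" for i
  proof -
    have "(\<Sum>m2<n. p i m2 * d m2) = (\<Sum>m2<n. d m2 * (\<Sum>r<n. cb' m2 r * W' r i))"
    proof (rule sum.cong)
      fix m2 assume "m2 \<in> {..<n}"
      then show "p i m2 * d m2 = d m2 * (\<Sum>r<n. cb' m2 r * W' r i)"
        by (cases "m2 \<le> J") (auto simp: prep' i d0)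
    qed simp
    also have "\<dots> = (\<Sum>r<n. e r * W' r i)"
      unfolding e_def by (simp add: sum_distrib_left sum_distrib_right mult.assoc) (subst sum.swap, simp)
    finally show ?thesis .
  qed
  have e0: "e r = 0" if "J < r" for r
  unfolding e_def
  proof (rule sum.neutral, rule ballI)
    fix m2 assume m2: "m2 \<in> {..<n}"
    show "d m2 * cb' m2 r = 0"
    proof (cases "J < m2")
      case True then show ?thesis using d0 m2 by simp
    next
      case False
      then show ?thesis using that cb0[of m2 r] b2[of r] by (cases "m2 = J") (auto simp: cb'_def)
    qed
  qed
  have eJ: "e J = b J J"
    unfolding e_def by (subst sum_one[where x=J]) (use J d0 cb0 in \<open>auto simp: cb'_def dJ cbn_def nat_neq_iff\<close>)
  have orth': "ipr n (W' j) (W' l) = 0" if jl: "j \<le> J" "l \<le> J" "j \<noteq> l" for j l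
  proof -
    consider "j < J" "l < J" | "j = J" "l < J" | "j < J" "l = J" using jl by linarith
    then show ?thesis
    proof cases
      case 1 then show ?thesis using orth jl by (simp add: W'o)
    next
      case 2 then show ?thesis using c by (simp add: W'J W'o)
    next
      case 3 then show ?thesis using c by (simp add: W'J W'o ipr_comm)
    qed
  qed
  have er: "e r = 0" if r: "r < J" for r
  proof -
    define X where "X = ipr n (\<lambda>i. \<Sum>l<n. a i l * Wn l) (W r)"
    have "X = (\<Sum>i<n. (\<Sum>r'<n. e r' * W' r' i) * W r i)"
      unfolding X_def ipr_def by (rule sum.cong) (simp_all add: e1 e2)
    also have "\<dots> = (\<Sum>r'<n. e r' * ipr n (W' r') (W r))"
      unfolding ipr_def by (simp add: sum_distrib_left sum_distrib_right mult.assoc) (subst sum.swap, simp)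
    also have "\<dots> = e r * ipr n (W' r) (W r)"
    proof (rule sum_one)
      show "r \<in> {..<n}" using r J by simp
      fix r' assume "r' \<in> {..<n}" "r' \<noteq> r"
      then show "e r' * ipr n (W' r') (W r) = 0"
        using orth'[of r' r] e0[of r'] r W'o[of r] by (cases "J < r'") auto
    qed simp
    finally have X1: "X = e r * ipr n (W r) (W r)" using W'o[of r] r by simp
    have "X = (\<Sum>i<n. \<Sum>l<n. Wn l * (a l i * W r i))"
      unfolding X_def ipr_def
    proof (rule sum.cong[OF refl])
      fix i assume i: "i \<in> {..<n}"
      show "(\<Sum>l<n. a i l * Wn l) * W r i = (\<Sum>l<n. Wn l * (a l i * W r i))"
        unfolding sum_distrib_right by (rule sum.cong) (use i in \<open>auto simp: sym mult_ac\<close>)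
    qed
    also have "\<dots> = (\<Sum>l<n. Wn l * (\<Sum>i<n. a l i * W r i))"
      by (subst sum.swap) (simp add: sum_distrib_left)
    also have "\<dots> = (\<Sum>l<n. Wn l * (b r r * W r l))"
      by (rule sum.cong) (simp_all add: eig r)
    also have "\<dots> = b r r * ipr n Wn (W r)"
      unfolding ipr_def by (simp add: sum_distrib_left mult.left_commute)
    also have "\<dots> = 0" using c r by simp
    finally have "e r * ipr n (W r) (W r) = 0" using X1 by simp
    then show ?thesis using pos[OF r] by simp
  qed
  have eigJ: "(\<Sum>l<n. a i l * Wn l) = b J J * Wn i" if i: "i < n" for i
  proof -
    have "(\<Sum>l<n. a i l * Wn l) = (\<Sum>r<n. e r * W' r i)" using e1 e2 i by simp
    also have "\<dots> = e J * W' J i"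
      by (rule sum_one) (use J er e0 in \<open>auto simp: nat_neq_iff\<close>)
    finally show ?thesis by (simp add: eJ W'J)
  qed
  have "gsinv n a p b (Suc J) W' ca' cb'"
    unfolding gsinv_def
  proof (intro conjI allI impI)
    fix j i assume "j < Suc J" "i < n"
    then show "W' j i = (\<Sum>m<n. ca' j m * p i m)"
      by (cases "j = J") (auto simp: W'J W'o ca'_def a1 Wrep)
  next
    fix j assume "j < Suc J"
    then show "ca' j j = 1" by (cases "j = J") (auto simp: ca'_def a2 ca1)
  next
    fix j m assume "j < Suc J" "j < m"
    then show "ca' j m = 0" by (cases "j = J") (auto simp: ca'_def a3 ca0)
  next
    fix j i assume "j < Suc J" "i < n"
    then show "p i j = (\<Sum>r<n. cb' j r * W' r i)" using prep' by simp
  next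
    fix j r assume "j < Suc J" "j < r"
    then show "cb' j r = 0" by (cases "j = J") (auto simp: cb'_def b2 cb0)
  next
    fix j l assume "j < Suc J" "l < Suc J" "j \<noteq> l"
    then show "ipr n (W' j) (W' l) = 0" using orth' by simp
  next
    fix j assume "j < Suc J"
    then show "ipr n (W' j) (W' j) > 0" by (cases "j = J") (auto simp: W'J W'o d pos)
  next
    fix j i assume "j < Suc J" "i < n"
    then show "(\<Sum>l<n. a i l * W' j l) = b j j * W' j i"
      by (cases "j = J") (auto simp: W'J W'o eigJ eig)
  qed
  then show ?thesis by blast
qed

lemma gs_full:
  fixes a p b q :: "nat \<Rightarrow> nat \<Rightarrow> real"
  assumes sym: "\<And>i j. i < n \<Longrightarrow> j < n \<Longrightarrow> a i j = a j i"
    and AP: "\<And>i j. i < n \<Longrightarrow> j < n \<Longrightarrow> (\<Sum>l<n. a i l * p l j) = (\<Sum>m<n. p i m * b m j)"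
    and ut: "\<And>m j. j < m \<Longrightarrow> m < n \<Longrightarrow> b m j = 0"
    and QP: "\<And>i j. i < n \<Longrightarrow> j < n \<Longrightarrow> (\<Sum>m<n. q i m * p m j) = (if i = j then 1 else 0)"
    and PQ: "\<And>i j. i < n \<Longrightarrow> j < n \<Longrightarrow> (\<Sum>m<n. p i m * q m j) = (if i = j then 1 else 0)"
  shows "\<exists>W. (\<forall>j<n. \<forall>i<n. (\<Sum>l<n. a i l * W j l) = b j j * W j i) \<and>
     (\<forall>j<n. \<forall>l<n. j \<noteq> l \<longrightarrow> ipr n (W j) (W l) = 0) \<and>
     (\<forall>j<n. ipr n (W j) (W j) > 0) \<and>
     (\<forall>x. \<exists>z. \<forall>i<n. x i = (\<Sum>j<n. z j * W j i))"
proof -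
  have "\<forall>J. J \<le> n \<longrightarrow> (\<exists>W ca cb. gsinv n a p b J W ca cb)"
  proof (intro allI)
    fix J show "J \<le> n \<longrightarrow> (\<exists>W ca cb. gsinv n a p b J W ca cb)"
    proof (induction J)
      case 0 show ?case by (simp add: gsinv_def)
    next
      case (Suc J)
      show ?case
      proof
        assume "Suc J \<le> n"
        then have "J < n" by simp
        moreover from Suc this obtain W ca cb where "gsinv n a p b J W ca cb" by auto
        ultimately show "\<exists>W ca cb. gsinv n a p b (Suc J) W ca cb"
          using gs_step[OF sym AP ut QP] by blast
      qed
    qed
  qed
  then obtain W ca cb where inv: "gsinv n a p b n W ca cb" by blast
  note I = inv[unfolded gsinv_def]
  have prep: "\<And>j i. j < n \<Longrightarrow> i < n \<Longrightarrow> p i j = (\<Sum>r<n. cb j r * W r i)"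
    using I[THEN conjunct2, THEN conjunct2, THEN conjunct2, THEN conjunct1] by blast
  have span: "\<exists>z. \<forall>i<n. x i = (\<Sum>j<n. z j * W j i)" for x
  proof -
    define y where "y m = (\<Sum>l<n. q m l * x l)" for m
    define z where "z r = (\<Sum>m<n. y m * cb m r)" for r
    have "x i = (\<Sum>j<n. z j * W j i)" if i: "i < n" for i
    proof -
      have "x i = (\<Sum>l<n. (if i = l then 1 else 0) * x l)"
        using i by (subst sum_one[where x=i]) auto
      also have "\<dots> = (\<Sum>l<n. (\<Sum>m<n. p i m * q m l) * x l)"
        by (rule sum.cong) (simp_all add: PQ i)
      also have "\<dots> = (\<Sum>m<n. p i m * y m)"
        unfolding y_def by (simp add: sum_distrib_left sum_distrib_right mult.assoc) (subst sum.swap, simp)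
      also have "\<dots> = (\<Sum>m<n. y m * (\<Sum>r<n. cb m r * W r i))"
        by (rule sum.cong) (simp_all add: prep i mult.commute)
      also have "\<dots> = (\<Sum>j<n. z j * W j i)"
        unfolding z_def by (simp add: sum_distrib_left sum_distrib_right mult.assoc) (subst sum.swap, simp)
      finally show ?thesis .
    qed
    then show ?thesis by blast
  qed
  show ?thesis
    apply (rule exI[of _ W])
    using I[THEN conjunct2, THEN conjunct2, THEN conjunct2, THEN conjunct2, THEN conjunct2] span
    by blast
qed

lemma mult_entry:
  fixes M N :: "'a::comm_semiring_1 mat"
  assumes "M \<in> carrier_mat n n" "N \<in> carrier_mat n n" "i < n" "j < n"
  shows "(M * N) $$ (i,j) = (\<Sum>l<n. M $$ (i,l) * N $$ (l,j))"
  using assms by (simp add: scalar_prod_def lessThan_atLeast0)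

lemma mat_eigen:
  fixes A :: "real mat"
  assumes A: "A \<in> carrier_mat n n"
    and sym: "\<And>i j. i < n \<Longrightarrow> j < n \<Longrightarrow> A $$ (i,j) = A $$ (j,i)"
    and cp: "char_poly A = (\<Prod>r\<leftarrow>es. [:- r, 1:])"
  shows "\<exists>W. (\<forall>j<n. \<forall>i<n. (\<Sum>l<n. A $$ (i,l) * W j l) = es ! j * W j i) \<and>
     (\<forall>j<n. \<forall>l<n. j \<noteq> l \<longrightarrow> ipr n (W j) (W l) = 0) \<and>
     (\<forall>j<n. ipr n (W j) (W j) > 0) \<and>
     (\<forall>x. \<exists>z. \<forall>i<n. x i = (\<Sum>j<n. z j * W j i))"
proof -
  obtain B P Q where sd: "schur_decomposition A es = (B,P,Q)" by (cases "schur_decomposition A es") auto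
  from schur_decomposition[OF A cp sd]
  have sim: "similar_mat_wit A B P Q" and ut: "upper_triangular B" and dg: "diag_mat B = es" by auto
  have dr: "dim_row A = n" using A by simp
  from sim[unfolded similar_mat_wit_def Let_def dr]
  have B: "B \<in> carrier_mat n n" and P: "P \<in> carrier_mat n n" and Q: "Q \<in> carrier_mat n n"
    and PQ: "P * Q = 1\<^sub>m n" and QP: "Q * P = 1\<^sub>m n" and APBQ: "A = P * B * Q" by auto
  have AP: "A * P = P * B"
  proof -
    have "A * P = P * B * Q * P" using APBQ by simp
    also have "\<dots> = P * B * (Q * P)" using P B Q by (simp add: assoc_mult_mat[of _ n n _ n _ n])
    also have "\<dots> = P * B" using P B QP by simp
    finally show ?thesis .
  qed
  have "\<exists>W. (\<forall>j<n. \<forall>i<n. (\<Sum>l<n. A $$ (i,l) * W j l) = B $$ (j,j) * W j i) \<and>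
     (\<forall>j<n. \<forall>l<n. j \<noteq> l \<longrightarrow> ipr n (W j) (W l) = 0) \<and>
     (\<forall>j<n. ipr n (W j) (W j) > 0) \<and>
     (\<forall>x. \<exists>z. \<forall>i<n. x i = (\<Sum>j<n. z j * W j i))"
  proof (rule gs_full[where p = "\<lambda>i j. P $$ (i,j)" and b = "\<lambda>i j. B $$ (i,j)" and q = "\<lambda>i j. Q $$ (i,j)"])
    show "\<And>i j. i < n \<Longrightarrow> j < n \<Longrightarrow> A $$ (i,j) = A $$ (j,i)" by (rule sym)
    show "(\<Sum>l<n. A $$ (i,l) * P $$ (l,j)) = (\<Sum>m<n. P $$ (i,m) * B $$ (m,j))" if "i < n" "j < n" for i j
      using mult_entry[OF A P that] mult_entry[OF P B that] AP by simp
    show "B $$ (m,j) = 0" if "j < m" "m < n" for m j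
      using ut that B unfolding upper_triangular_def by auto
    show "(\<Sum>m<n. Q $$ (i,m) * P $$ (m,j)) = (if i = j then 1 else 0)" if "i < n" "j < n" for i j
      using mult_entry[OF Q P that] QP that by simp
    show "(\<Sum>m<n. P $$ (i,m) * Q $$ (m,j)) = (if i = j then 1 else 0)" if "i < n" "j < n" for i j
      using mult_entry[OF P Q that] PQ that by simp
  qed
  moreover have "\<And>j. j < n \<Longrightarrow> B $$ (j,j) = es ! j" using dg B unfolding diag_mat_def by auto
  ultimately show ?thesis by auto
qed

lemma hom_sys:
  fixes a :: "nat \<Rightarrow> nat \<Rightarrow> real"
  assumes "finite I" "m < card I"
  shows "\<exists>c. (\<exists>i\<in>I. c i \<noteq> 0) \<and> (\<forall>r<m. (\<Sum>i\<in>I. a r i * c i) = 0)"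
  using assms
proof (induction m arbitrary: I a)
  case 0
  then obtain i0 where "i0 \<in> I" by fastforce
  then show ?case by (intro exI[of _ "\<lambda>i. if i = i0 then 1 else 0"]) auto
next
  case (Suc m)
  show ?case
  proof (cases "\<forall>i\<in>I. a m i = 0")
    case True
    from Suc.IH[of I a] Suc.prems obtain c where c: "\<exists>i\<in>I. c i \<noteq> 0" "\<forall>r<m. (\<Sum>i\<in>I. a r i * c i) = 0"
      by auto
    have "\<forall>r<Suc m. (\<Sum>i\<in>I. a r i * c i) = 0"
      using c(2) True by (auto simp: less_Suc_eq)
    then show ?thesis using c(1) by blast
  next
    case False
    then obtain i0 where i0: "i0 \<in> I" "a m i0 \<noteq> 0" by blast
    define I' where "I' = I - {i0}"
    define a' where "a' r i = a r i - a r i0 * a m i / a m i0" for r i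
    have fI': "finite I'" using Suc.prems unfolding I'_def by simp
    have cI': "m < card I'" using Suc.prems i0 unfolding I'_def by simp
    from Suc.IH[OF fI' cI', of a'] obtain c' where
      c': "\<exists>i\<in>I'. c' i \<noteq> 0" "\<forall>r<m. (\<Sum>i\<in>I'. a' r i * c' i) = 0" by blast
    define c where "c i = (if i = i0 then - (\<Sum>i\<in>I'. a m i * c' i) / a m i0 else c' i)" for i
    have split: "(\<Sum>i\<in>I. a r i * c i) = a r i0 * c i0 + (\<Sum>i\<in>I'. a r i * c' i)" for r
    proof -
      have "(\<Sum>i\<in>I. a r i * c i) = a r i0 * c i0 + (\<Sum>i\<in>I'. a r i * c i)"
        unfolding I'_def using Suc.prems i0 by (simp add: sum.remove)
      also have "(\<Sum>i\<in>I'. a r i * c i) = (\<Sum>i\<in>I'. a r i * c' i)"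
        by (rule sum.cong) (auto simp: c_def I'_def)
      finally show ?thesis .
    qed
    have rows: "(\<Sum>i\<in>I. a r i * c i) = 0" if r: "r < Suc m" for r
    proof (cases "r = m")
      case True
      then show ?thesis using split[of m] i0 by (simp add: c_def)
    next
      case False
      then have r': "r < m" using r by simp
      have "(\<Sum>i\<in>I'. a' r i * c' i) = (\<Sum>i\<in>I'. a r i * c' i) - a r i0 / a m i0 * (\<Sum>i\<in>I'. a m i * c' i)"
        unfolding a'_def sum_distrib_left sum_subtractf[symmetric] by (rule sum.cong) (simp_all add: algebra_simps)
      then show ?thesis using split[of r] c'(2) r' i0 by (simp add: c_def algebra_simps)
    qed
    have "\<exists>i\<in>I. c i \<noteq> 0" using c'(1) unfolding c_def I'_def by auto
    then show ?thesis using rows by blast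
  qed
qed

lemma bip_restrict:
  "bip_ratio N w k (restrict A {..<k}) (restrict B {..<k}) i = bip_ratio N w k A B i" if "i < k"
proof -
  have "rest_set N k (restrict A {..<k}) (restrict B {..<k}) = rest_set N k A B"
    unfolding rest_set_def by auto
  then show ?thesis unfolding bip_ratio_def using that by simp
qed

lemma hbar_attained:
  assumes "k \<le> N"
  shows "\<exists>A B. sub_bipartition N k A B \<and> hbar_star N w k = Min (bip_ratio N w k A B ` {..<k})"
proof -
  define S where "S = {Min (bip_ratio N w k A B ` {..<k}) | A B. sub_bipartition N k A B}"
  define X where "X = PiE {..<k} (\<lambda>_. Pow {..<N})"
  have fX: "finite X" unfolding X_def by (intro finite_PiE) auto
  have "S \<subseteq> (\<lambda>(A,B). Min (bip_ratio N w k A B ` {..<k})) ` (X \<times> X)"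
  proof
    fix s assume "s \<in> S"
    then obtain A B where sb: "sub_bipartition N k A B" and s: "s = Min (bip_ratio N w k A B ` {..<k})"
      unfolding S_def by blast
    have "restrict A {..<k} \<in> X" "restrict B {..<k} \<in> X"
      using sb unfolding X_def sub_bipartition_def by auto
    moreover have "bip_ratio N w k (restrict A {..<k}) (restrict B {..<k}) ` {..<k} = bip_ratio N w k A B ` {..<k}"
      using bip_restrict by (intro image_cong) auto
    ultimately show "s \<in> (\<lambda>(A,B). Min (bip_ratio N w k A B ` {..<k})) ` (X \<times> X)"
      using s by (intro image_eqI[of _ _ "(restrict A {..<k}, restrict B {..<k})"]) auto
  qed
  then have fS: "finite S" using fX by (meson finite_SigmaI finite_imageI finite_subset)
  have "sub_bipartition N k (\<lambda>i. {i}) (\<lambda>i. {})"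
    using assms unfolding sub_bipartition_def by auto
  then have nS: "S \<noteq> {}" unfolding S_def by blast
  have "hbar_star N w k \<in> S" unfolding hbar_star_def S_def[symmetric] using fS nS by (rule Max_in)
  then show ?thesis unfolding S_def by blast
qed

definition ind :: "nat set \<Rightarrow> nat \<Rightarrow> real" where "ind X u = (if u \<in> X then 1 else 0)"

lemma dsum_Ew:
  assumes "X \<subseteq> {..<N}" "Y \<subseteq> {..<N}"
  shows "(\<Sum>u<N. \<Sum>l<N. w u l * (ind X u * ind Y l)) = Ew w X Y"
proof -
  have "(\<Sum>u<N. \<Sum>l<N. w u l * (ind X u * ind Y l)) = (\<Sum>u<N. if u \<in> X then (\<Sum>l<N. if l \<in> Y then w u l else 0) else 0)"
    by (rule sum.cong) (auto simp: ind_def intro!: sum.cong)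
  also have "\<dots> = (\<Sum>u\<in>X. (\<Sum>l\<in>Y. w u l))"
    using assms by (simp add: sum.inter_restrict[symmetric] Int_absorb1 inf.absorb2)
  finally show ?thesis unfolding Ew_def .
qed

lemma Ew_sym:
  assumes "X \<subseteq> {..<N}" "Y \<subseteq> {..<N}" "\<And>u v. u < N \<Longrightarrow> v < N \<Longrightarrow> w u v = w v u"
  shows "Ew w X Y = Ew w Y X"
proof -
  have fX: "finite X" "finite Y" using assms by (auto intro: finite_subset)
  have "Ew w X Y = (\<Sum>v\<in>Y. \<Sum>u\<in>X. w u v)" unfolding Ew_def by (rule sum.swap)
  also have "\<dots> = Ew w Y X" unfolding Ew_def
    by (rule sum.cong[OF refl], rule sum.cong[OF refl]) (use assms in auto)
  finally show ?thesis .
qed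

context
  fixes N k :: nat and A B :: "nat \<Rightarrow> nat set" and c :: "nat \<Rightarrow> real"
  assumes sb: "sub_bipartition N k A B"
begin

definition ff :: "nat \<Rightarrow> real" where "ff u = (\<Sum>i<k. c i * (ind (A i) u - ind (B i) u))"

lemma sbA: "i < k \<Longrightarrow> A i \<subseteq> {..<N}" and sbB: "i < k \<Longrightarrow> B i \<subseteq> {..<N}"
  and sbAB: "i < k \<Longrightarrow> A i \<inter> B i = {}"
  and sbne: "i < k \<Longrightarrow> A i \<union> B i \<noteq> {}"
  and sbd: "i < k \<Longrightarrow> j < k \<Longrightarrow> i \<noteq> j \<Longrightarrow> u \<in> A i \<union> B i \<Longrightarrow> u \<notin> A j \<union> B j"
  using sb unfolding sub_bipartition_def by blast+

lemma R_iff: "u \<in> rest_set N k A B \<longleftrightarrow> u < N \<and> (\<forall>i<k. u \<notin> A i \<union> B i)"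
  unfolding rest_set_def by auto

lemma ffA: "j < k \<Longrightarrow> u \<in> A j \<Longrightarrow> ff u = c j"
  unfolding ff_def
  by (subst sum_one[where x=j]) (use sbd[of j] sbAB[of j] in \<open>auto simp: ind_def\<close>)

lemma ffB: "j < k \<Longrightarrow> u \<in> B j \<Longrightarrow> ff u = - c j"
  unfolding ff_def
  by (subst sum_one[where x=j]) (use sbd[of j] sbAB[of j] in \<open>auto simp: ind_def\<close>)

lemma ffR: "\<forall>i<k. u \<notin> A i \<union> B i \<Longrightarrow> ff u = 0"
  unfolding ff_def by (rule sum.neutral) (auto simp: ind_def)

definition TT :: "nat \<Rightarrow> nat \<Rightarrow> nat \<Rightarrow> real" where
  "TT i u l = 4 * (ind (A i) u * ind (B i) l + ind (B i) u * ind (A i) l)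
     + ind (A i \<union> B i) u * ind (rest_set N k A B) l + ind (rest_set N k A B) u * ind (A i \<union> B i) l"

lemma pointwise:
  assumes u: "u < N" and l: "l < N"
  shows "(\<Sum>i<k. c i ^ 2 * TT i u l) \<le> (ff u - ff l)^2"
proof (cases "\<forall>i<k. u \<notin> A i \<union> B i")
  case uR: True
  then have uR': "u \<in> rest_set N k A B" using u R_iff by simp
  have T: "TT i u l = ind (A i \<union> B i) l" if "i < k" for i
    using uR that uR' unfolding TT_def by (auto simp: ind_def)
  show ?thesis
  proof (cases "\<forall>i<k. l \<notin> A i \<union> B i")
    case True
    then have "(\<Sum>i<k. c i ^ 2 * TT i u l) = 0" by (intro sum.neutral) (auto simp: T ind_def)
    then show ?thesis by simp
  next
    case False
    then obtain j where j: "j < k" "l \<in> A j \<union> B j" by blast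
    have "(\<Sum>i<k. c i ^ 2 * TT i u l) = c j ^ 2 * TT j u l"
      by (rule sum_one) (use j sbd[of j] in \<open>auto simp: T ind_def\<close>)
    also have "\<dots> = c j ^ 2" using j by (simp add: T ind_def)
    also have "\<dots> = (ff u - ff l)^2" using j ffA ffB ffR[OF uR] by (auto simp: power2_eq_square)
    finally show ?thesis by simp
  qed
next
  case False
  then obtain j where j: "j < k" "u \<in> A j \<union> B j" by blast
  have uR: "u \<notin> rest_set N k A B" using j R_iff by auto
  have "(\<Sum>i<k. c i ^ 2 * TT i u l) = c j ^ 2 * TT j u l"
    by (rule sum_one) (use j sbd[of j] uR in \<open>auto simp: TT_def ind_def\<close>)
  also have "\<dots> \<le> (ff u - ff l)^2"
  proof (cases "u \<in> A j")
    case uA: True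
    then have uB: "u \<notin> B j" using sbAB[OF j(1)] by blast
    have T: "TT j u l = 4 * ind (B j) l + ind (rest_set N k A B) l"
      using uA uB uR unfolding TT_def by (simp add: ind_def)
    show ?thesis
    proof (cases "l \<in> B j")
      case True
      then have "l \<notin> rest_set N k A B" using R_iff j by auto
      then show ?thesis using True T ffA[OF j(1) uA] ffB[OF j(1) True] by (simp add: ind_def power2_eq_square)
    next
      case lB: False
      show ?thesis
      proof (cases "l \<in> rest_set N k A B")
        case True
        then show ?thesis using lB T ffA[OF j(1) uA] ffR R_iff by (simp add: ind_def)
      next
        case False then show ?thesis using lB T by (simp add: ind_def)
      qed
    qed
  next
    case False
    then have uB: "u \<in> B j" using j by blast
    have uA: "u \<notin> A j" using False .
    have T: "TT j u l = 4 * ind (A j) l + ind (rest_set N k A B) l"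
      using uA uB uR unfolding TT_def by (simp add: ind_def)
    show ?thesis
    proof (cases "l \<in> A j")
      case True
      then have "l \<notin> rest_set N k A B" using R_iff j by auto
      then show ?thesis using True T ffB[OF j(1) uB] ffA[OF j(1) True] by (simp add: ind_def power2_eq_square)
    next
      case lA: False
      show ?thesis
      proof (cases "l \<in> rest_set N k A B")
        case True
        then show ?thesis using lA T ffB[OF j(1) uB] ffR R_iff by (simp add: ind_def)
      next
        case False then show ?thesis using lA T by (simp add: ind_def)
      qed
    qed
  qed
  finally show ?thesis .
qed



lemma sum_ind: assumes "X \<subseteq> {..<N}" shows "(\<Sum>u<N. g u * ind X u) = sum g X"
proof -
  have "(\<Sum>u<N. g u * ind X u) = (\<Sum>u<N. if u \<in> X then g u else 0)"
    by (rule sum.cong) (auto simp: ind_def)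
  also have "\<dots> = sum g ({..<N} \<inter> X)" by (simp add: sum.inter_restrict)
  also have "{..<N} \<inter> X = X" using assms by auto
  finally show ?thesis .
qed

lemma ff_sq: "u < N \<Longrightarrow> (ff u)^2 = (\<Sum>i<k. c i ^ 2 * ind (A i \<union> B i) u)"
proof (cases "\<forall>i<k. u \<notin> A i \<union> B i")
  case True
  then show ?thesis using ffR by (simp add: ind_def)
next
  case False
  then obtain j where j: "j < k" "u \<in> A j \<union> B j" by blast
  have "(\<Sum>i<k. c i ^ 2 * ind (A i \<union> B i) u) = c j ^ 2 * ind (A j \<union> B j) u"
    by (rule sum_one) (use j sbd[of j] in \<open>auto simp: ind_def\<close>)
  then show ?thesis using j ffA ffB by (auto simp: ind_def)
qed

lemma mass: "(\<Sum>u<N. g u * (ff u)^2) = (\<Sum>i<k. c i ^ 2 * sum g (A i \<union> B i))"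
proof -
  have "(\<Sum>u<N. g u * (ff u)^2) = (\<Sum>u<N. \<Sum>i<k. c i ^ 2 * (g u * ind (A i \<union> B i) u))"
    by (rule sum.cong) (simp_all add: ff_sq sum_distrib_left mult_ac)
  also have "\<dots> = (\<Sum>i<k. c i ^ 2 * (\<Sum>u<N. g u * ind (A i \<union> B i) u))"
    by (subst sum.swap) (simp add: sum_distrib_left)
  also have "\<dots> = (\<Sum>i<k. c i ^ 2 * sum g (A i \<union> B i))"
    by (rule sum.cong) (use sbA sbB in \<open>auto simp: sum_ind\<close>)
  finally show ?thesis .
qed

lemma energy:
  assumes nonneg: "\<And>u v. u < N \<Longrightarrow> v < N \<Longrightarrow> w u v \<ge> 0"
    and sym: "\<And>u v. u < N \<Longrightarrow> v < N \<Longrightarrow> w u v = w v u"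
  shows "(\<Sum>i<k. c i ^ 2 * (8 * Ew w (A i) (B i) + 2 * Ew w (A i \<union> B i) (rest_set N k A B)))
     \<le> (\<Sum>u<N. \<Sum>l<N. w u l * (ff u - ff l)^2)"
proof -
  let ?R = "rest_set N k A B"
  have R: "?R \<subseteq> {..<N}" unfolding rest_set_def by auto
  have inner: "(\<Sum>u<N. \<Sum>l<N. w u l * TT i u l) = 8 * Ew w (A i) (B i) + 2 * Ew w (A i \<union> B i) ?R"
    if i: "i < k" for i
  proof -
    have Ai: "A i \<subseteq> {..<N}" "B i \<subseteq> {..<N}" "A i \<union> B i \<subseteq> {..<N}" using sbA[OF i] sbB[OF i] by auto
    have "(\<Sum>u<N. \<Sum>l<N. w u l * TT i u l) =
      4 * (\<Sum>u<N. \<Sum>l<N. w u l * (ind (A i) u * ind (B i) l)) + 4 * (\<Sum>u<N. \<Sum>l<N. w u l * (ind (B i) u * ind (A i) l))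
      + (\<Sum>u<N. \<Sum>l<N. w u l * (ind (A i \<union> B i) u * ind ?R l)) + (\<Sum>u<N. \<Sum>l<N. w u l * (ind ?R u * ind (A i \<union> B i) l))"
    proof -
      have pw: "w u l * TT i u l = 4 * (w u l * (ind (A i) u * ind (B i) l)) + 4 * (w u l * (ind (B i) u * ind (A i) l))
        + w u l * (ind (A i \<union> B i) u * ind ?R l) + w u l * (ind ?R u * ind (A i \<union> B i) l)" for u l
        unfolding TT_def by (simp add: algebra_simps)
      show ?thesis by (simp only: pw sum.distrib sum_distrib_left)
    qed
    also have "\<dots> = 4 * Ew w (A i) (B i) + 4 * Ew w (B i) (A i) + Ew w (A i \<union> B i) ?R + Ew w ?R (A i \<union> B i)"
      using Ai R by (simp add: dsum_Ew)
    also have "\<dots> = 8 * Ew w (A i) (B i) + 2 * Ew w (A i \<union> B i) ?R"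
      using Ew_sym[OF Ai(1) Ai(2) sym] Ew_sym[OF Ai(3) R sym] by simp
    finally show ?thesis .
  qed
  have "(\<Sum>i<k. c i ^ 2 * (8 * Ew w (A i) (B i) + 2 * Ew w (A i \<union> B i) ?R))
      = (\<Sum>i<k. c i ^ 2 * (\<Sum>u<N. \<Sum>l<N. w u l * TT i u l))"
    by (rule sum.cong) (simp_all add: inner)
  also have "\<dots> = (\<Sum>u<N. \<Sum>l<N. w u l * (\<Sum>i<k. c i ^ 2 * TT i u l))"
    by (simp add: sum_distrib_left sum_distrib_right mult_ac) (subst sum.swap, rule sum.cong[OF refl], subst sum.swap, simp)
  also have "\<dots> \<le> (\<Sum>u<N. \<Sum>l<N. w u l * (ff u - ff l)^2)"
    by (intro sum_mono mult_left_mono pointwise) (auto intro: nonneg)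
  finally show ?thesis .
qed

end

theorem theorem4p1:
  fixes N k :: nat and w :: "nat \<Rightarrow> nat \<Rightarrow> real"
  assumes sym: "\<And>u v. u < N \<Longrightarrow> v < N \<Longrightarrow> w u v = w v u"
    and nonneg: "\<And>u v. u < N \<Longrightarrow> v < N \<Longrightarrow> w u v \<ge> 0"
    and noloop: "\<And>u. u < N \<Longrightarrow> w u u = 0"
    and degpos: "\<And>u. u < N \<Longrightarrow> deg N w u > 0"
    and k: "1 \<le> k" "k \<le> N"
  shows "lap_eigs N w ! (N - k) \<ge> 2 * hbar_star N w k"
proof -
  define dg where "dg u = deg N w u" for u
  have dpos: "\<And>u. u < N \<Longrightarrow> dg u > 0" using degpos dg_def by simp
  have dge: "\<And>u. u < N \<Longrightarrow> deg N w u \<ge> 0" using degpos less_imp_le by blast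
  have dnz: "\<And>u. u < N \<Longrightarrow> dg u \<noteq> 0" using dpos by (metis less_irrefl)
  define Sm where "Sm = mat N N (\<lambda>(i,j). (if i = j then 1 else 0) - w i j / sqrt (dg i * dg j))"
  have Sm: "Sm \<in> carrier_mat N N" unfolding Sm_def by simp
  have Sme: "Sm $$ (i,j) = (if i = j then 1 else 0) - w i j / (sqrt (dg i) * sqrt (dg j))" if "i < N" "j < N" for i j
    using that unfolding Sm_def by (simp add: real_sqrt_mult)
  have Ssym: "\<And>i j. i < N \<Longrightarrow> j < N \<Longrightarrow> Sm $$ (i,j) = Sm $$ (j,i)"
    using sym by (simp add: Sme mult.commute)
  define Dm where "Dm = mat_diag N (\<lambda>i. 1 / sqrt (dg i))"
  define Dp where "Dp = mat_diag N (\<lambda>i. sqrt (dg i))"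
  have "char_poly (norm_lap N w) = char_poly Sm"
  proof (rule char_poly_similar)
    have c1: "Dm * Dp = 1\<^sub>m N" "Dp * Dm = 1\<^sub>m N"
      unfolding Dm_def Dp_def mat_diag_diag by (auto intro!: eq_matI simp: mat_diag_def dnz)
    have "Dm * Sm * Dp = mat N N (\<lambda>(i,j). 1 / sqrt (dg i) * Sm $$ (i,j) * sqrt (dg j))"
      unfolding Dm_def Dp_def using Sm
      by (subst mat_diag_mult_left[of _ N N], simp, subst mat_diag_mult_right[of _ N N]) (auto intro!: eq_matI)
    also have "\<dots> = norm_lap N w"
    proof (rule eq_matI)
      fix i j assume ij: "i < dim_row (norm_lap N w)" "j < dim_col (norm_lap N w)"
      then have ij': "i < N" "j < N" by (auto simp: norm_lap_def)
      have si: "sqrt (dg i) > 0" "sqrt (dg j) > 0" using dpos ij' by auto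
      have "1 / sqrt (dg i) * Sm $$ (i,j) * sqrt (dg j) = (if i = j then 1 else 0) - w i j / deg N w i"
      proof (cases "i = j")
        case True then show ?thesis using ij' si noloop by (simp add: Sme)
      next
        case False
        have "sqrt (dg i) * sqrt (dg i) = dg i" using dpos[of i] ij' by simp
        then show ?thesis using ij' si False by (simp add: Sme field_simps dg_def)
      qed
      then show "mat N N (\<lambda>(i,j). 1 / sqrt (dg i) * Sm $$ (i,j) * sqrt (dg j)) $$ (i,j) = norm_lap N w $$ (i,j)"
        using ij' by (simp add: norm_lap_def)
    qed (auto simp: norm_lap_def)
    finally have eq: "norm_lap N w = Dm * Sm * Dp" by simp
    have nl: "norm_lap N w \<in> carrier_mat N N" "dim_row (norm_lap N w) = N" by (simp_all add: norm_lap_def)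
    have DD: "Dm \<in> carrier_mat N N" "Dp \<in> carrier_mat N N" unfolding Dm_def Dp_def by simp_all
    have "similar_mat_wit (norm_lap N w) Sm Dm Dp"
      unfolding similar_mat_wit_def Let_def nl(2) using nl(1) DD Sm c1 eq by simp
    then show "similar_mat (norm_lap N w) Sm" unfolding similar_mat_def by blast
  qed
  note cpS = this
  obtain rs where rs: "char_poly Sm = (\<Prod>r\<leftarrow>rs. [:- r, 1:])" "sorted rs" "length rs = N"
    using sym_real_split[OF Sm Ssym] by blast
  have uniq: "\<exists>!ls. length ls = N \<and> sorted ls \<and> char_poly (norm_lap N w) = (\<Prod>a\<leftarrow>ls. [:- a, 1:])"
  proof (rule ex1I[of _ rs])
    show "length rs = N \<and> sorted rs \<and> char_poly (norm_lap N w) = (\<Prod>a\<leftarrow>rs. [:- a, 1:])"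
      using rs cpS by simp
    fix ls assume "length ls = N \<and> sorted ls \<and> char_poly (norm_lap N w) = (\<Prod>a\<leftarrow>ls. [:- a, 1:])"
    then show "ls = rs" using rs cpS sorted_lin_unique[of ls rs] by simp
  qed
  define ls where "ls = lap_eigs N w"
  have lsP: "length ls = N \<and> sorted ls \<and> char_poly (norm_lap N w) = (\<Prod>a\<leftarrow>ls. [:- a, 1:])"
    unfolding ls_def lap_eigs_def by (rule theI'[OF uniq])
  then have lslen: "length ls = N" and lssort: "sorted ls" and cpl: "char_poly Sm = (\<Prod>a\<leftarrow>ls. [:- a, 1:])"
    using cpS by auto
  have exW: "\<exists>W. (\<forall>j<N. \<forall>i<N. (\<Sum>l<N. Sm $$ (i,l) * W j l) = ls ! j * W j i) \<and>
     (\<forall>j<N. \<forall>l<N. j \<noteq> l \<longrightarrow> ipr N (W j) (W l) = 0) \<and>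
     (\<forall>j<N. ipr N (W j) (W j) > 0) \<and>
     (\<forall>x. \<exists>z. \<forall>i<N. x i = (\<Sum>j<N. z j * W j i))"
    using mat_eigen[OF Sm Ssym cpl] by simp
  from exW obtain W where WW: "(\<forall>j<N. \<forall>i<N. (\<Sum>l<N. Sm $$ (i,l) * W j l) = ls ! j * W j i) \<and>
     (\<forall>j<N. \<forall>l<N. j \<noteq> l \<longrightarrow> ipr N (W j) (W l) = 0) \<and>
     (\<forall>j<N. ipr N (W j) (W j) > 0) \<and>
     (\<forall>x. \<exists>z. \<forall>i<N. x i = (\<Sum>j<N. z j * W j i))" by (elim exE)
  have Weig: "\<And>j i. j < N \<Longrightarrow> i < N \<Longrightarrow> (\<Sum>l<N. Sm $$ (i,l) * W j l) = ls ! j * W j i"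
    using WW[THEN conjunct1] by blast
  have Worth: "\<And>j l. j < N \<Longrightarrow> l < N \<Longrightarrow> j \<noteq> l \<Longrightarrow> ipr N (W j) (W l) = 0"
    using WW[THEN conjunct2, THEN conjunct1] by blast
  have Wpos: "\<And>j. j < N \<Longrightarrow> ipr N (W j) (W j) > 0"
    using WW[THEN conjunct2, THEN conjunct2, THEN conjunct1] by blast
  have Wspan: "\<And>x. \<exists>z. \<forall>i<N. x i = (\<Sum>j<N. z j * W j i)"
    using WW[THEN conjunct2, THEN conjunct2, THEN conjunct2] by blast
  define lam where "lam = ls ! (N - k)"
  have lsle: "ls ! j \<le> lam" if "j \<le> N - k" for j
    unfolding lam_def using lssort lslen that k by (intro sorted_nth_mono) auto
  obtain A B where sb: "sub_bipartition N k A B" and hdef: "hbar_star N w k = Min (bip_ratio N w k A B ` {..<k})"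
    using hbar_attained[OF k(2)] by blast
  define h where "h = hbar_star N w k"
  define R where "R = rest_set N k A B"
  have hle: "h \<le> bip_ratio N w k A B i" if "i < k" for i
    unfolding h_def hdef using that by (intro Min_le) auto
  have volpos: "vol N w (A i \<union> B i) > 0" if i: "i < k" for i
  proof -
    obtain u where u: "u \<in> A i \<union> B i" using sbne[OF sb i] by blast
    have sub: "A i \<union> B i \<subseteq> {..<N}" using sbA[OF sb i] sbB[OF sb i] by auto
    then have fin: "finite (A i \<union> B i)" by (rule finite_subset) simp
    have "deg N w u > 0" using degpos u sub by auto
    moreover have "deg N w u \<le> vol N w (A i \<union> B i)" unfolding vol_def
      by (rule member_le_sum) (use fin u degpos sub in \<open>auto intro: less_imp_le\<close>)
    ultimately show ?thesis by linarith
  qed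
  have hvol: "4 * h * vol N w (A i \<union> B i) \<le> 8 * Ew w (A i) (B i) + 2 * Ew w (A i \<union> B i) R"
    if i: "i < k" for i
  proof -
    have "h \<le> (2 * Ew w (A i) (B i) + (1/2) * Ew w (A i \<union> B i) R) / vol N w (A i \<union> B i)"
      using hle[OF i] unfolding bip_ratio_def R_def .
    then have "h * vol N w (A i \<union> B i) \<le> 2 * Ew w (A i) (B i) + (1/2) * Ew w (A i \<union> B i) R"
      using volpos[OF i] by (simp add: pos_le_divide_eq)
    then show ?thesis by linarith
  qed
  define g where "g i u = sqrt (dg u) * (ind (A i) u - ind (B i) u)" for i u
  define a where "a r i = ipr N (g i) (W (N - k + 1 + r))" for r i
  obtain c where cnz: "\<exists>i\<in>{..<k}. c i \<noteq> 0" and csys: "\<forall>r<k-1. (\<Sum>i\<in>{..<k}. a r i * c i) = 0"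
    using hom_sys[of "{..<k}" "k - 1" a] k by auto
  define f where "f = ff k A B c"
  define x where "x u = sqrt (dg u) * f u" for u
  have ipx_g: "ipr N x (W j) = (\<Sum>i<k. c i * ipr N (g i) (W j))" for j
    unfolding ipr_def x_def f_def ff_def[OF sb] g_def
    by (simp add: sum_distrib_left sum_distrib_right mult_ac) (subst sum.swap, simp)
  have ipx0: "ipr N x (W j) = 0" if "N - k < j" "j < N" for j
  proof -
    define r where "r = j - (N - k + 1)"
    have r: "r < k - 1" "j = N - k + 1 + r" using that k unfolding r_def by auto
    show ?thesis using csys r unfolding ipx_g a_def by (simp add: mult.commute)
  qed
  obtain z where z: "\<And>i. i < N \<Longrightarrow> x i = (\<Sum>j<N. z j * W j i)" using Wspan by blast
  have ipxW: "ipr N x (W j) = z j * ipr N (W j) (W j)" if j: "j < N" for j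
  proof -
    have "ipr N x (W j) = (\<Sum>j'<N. z j' * ipr N (W j') (W j))"
      unfolding ipr_def by (simp add: z sum_distrib_right sum_distrib_left mult_ac) (subst sum.swap, simp)
    also have "\<dots> = z j * ipr N (W j) (W j)"
      by (rule sum_one) (use j Worth in auto)
    finally show ?thesis .
  qed
  have z0: "z j = 0" if "N - k < j" "j < N" for j
    using ipx0[OF that] ipxW[of j] Wpos[of j] that by simp
  define Q where "Q = (\<Sum>u<N. x u * (\<Sum>l<N. Sm $$ (u,l) * x l))"
  have ipxx: "ipr N x x = (\<Sum>j<N. z j ^ 2 * ipr N (W j) (W j))"
  proof -
    have "ipr N x x = (\<Sum>j<N. z j * ipr N x (W j))"
      unfolding ipr_def by (simp add: z sum_distrib_left sum_distrib_right mult_ac) (subst sum.swap, simp)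
    then show ?thesis by (simp add: ipxW power2_eq_square mult_ac)
  qed
  have Qup: "Q \<le> lam * ipr N x x"
  proof -
    have Sx: "(\<Sum>l<N. Sm $$ (u,l) * x l) = (\<Sum>j<N. z j * ls ! j * W j u)" if u: "u < N" for u
    proof -
      have "(\<Sum>l<N. Sm $$ (u,l) * x l) = (\<Sum>j<N. z j * (\<Sum>l<N. Sm $$ (u,l) * W j l))"
        by (simp add: z sum_distrib_left sum_distrib_right mult_ac) (subst sum.swap, simp)
      also have "\<dots> = (\<Sum>j<N. z j * ls ! j * W j u)" by (rule sum.cong) (simp_all add: Weig u)
      finally show ?thesis .
    qed
    have "Q = (\<Sum>u<N. x u * (\<Sum>j<N. z j * ls ! j * W j u))"
      unfolding Q_def by (rule sum.cong) (simp_all add: Sx)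
    also have "\<dots> = (\<Sum>j<N. z j * ls ! j * ipr N x (W j))"
      unfolding ipr_def by (simp add: sum_distrib_left sum_distrib_right mult_ac) (subst sum.swap, simp)
    also have "\<dots> = (\<Sum>j<N. ls ! j * (z j ^ 2 * ipr N (W j) (W j)))"
      by (rule sum.cong) (simp_all add: ipxW power2_eq_square mult_ac)
    also have "\<dots> \<le> (\<Sum>j<N. lam * (z j ^ 2 * ipr N (W j) (W j)))"
    proof (rule sum_mono)
      fix j assume j: "j \<in> {..<N}"
      show "ls ! j * (z j ^ 2 * ipr N (W j) (W j)) \<le> lam * (z j ^ 2 * ipr N (W j) (W j))"
      proof (cases "j \<le> N - k")
        case True
        have "z j ^ 2 * ipr N (W j) (W j) \<ge> 0" using Wpos[of j] j by simp
        then show ?thesis using lsle[OF True] by (rule mult_right_mono[rotated])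
      next
        case False then show ?thesis using z0[of j] j by simp
      qed
    qed
    also have "\<dots> = lam * ipr N x x" by (simp add: ipxx sum_distrib_left)
    finally show ?thesis .
  qed
  have Qlow: "2 * h * ipr N x x \<le> Q"
  proof -
    have xx: "ipr N x x = (\<Sum>u<N. deg N w u * (f u)^2)"
      unfolding ipr_def x_def by (rule sum.cong) (simp_all add: dg_def power2_eq_square mult_ac abs_of_nonneg dge)
    have trm: "x u * (Sm $$ (u,l) * x l) = (if u = l then dg u * (f u)^2 else 0) - w u l * f u * f l"
      if "u < N" "l < N" for u l
    proof -
      have "sqrt (dg u) > 0" "sqrt (dg l) > 0" using dpos that by auto
      moreover have "sqrt (dg u) * sqrt (dg u) = dg u" using dpos[of u] that by simp
      ultimately show ?thesis using that noloop unfolding x_def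
        by (auto simp: Sme field_simps power2_eq_square)
    qed
    have Q2: "Q = (\<Sum>u<N. dg u * (f u)^2) - (\<Sum>u<N. \<Sum>l<N. w u l * f u * f l)"
    proof -
      have "Q = (\<Sum>u<N. \<Sum>l<N. (if u = l then dg u * (f u)^2 else 0) - w u l * f u * f l)"
        unfolding Q_def sum_distrib_left by (rule sum.cong[OF refl], rule sum.cong[OF refl]) (simp add: trm)
      also have "\<dots> = (\<Sum>u<N. dg u * (f u)^2) - (\<Sum>u<N. \<Sum>l<N. w u l * f u * f l)"
        by (simp add: sum_subtractf sum.delta)
      finally show ?thesis .
    qed
    have en: "(\<Sum>u<N. \<Sum>l<N. w u l * (f u - f l)^2) = 2 * Q"
    proof -
      have e1: "(\<Sum>u<N. \<Sum>l<N. w u l * (f u)^2) = (\<Sum>u<N. dg u * (f u)^2)"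
        unfolding dg_def deg_def by (simp add: sum_distrib_right)
      have e2: "(\<Sum>u<N. \<Sum>l<N. w u l * (f l)^2) = (\<Sum>u<N. dg u * (f u)^2)"
      proof -
        have "(\<Sum>u<N. \<Sum>l<N. w u l * (f l)^2) = (\<Sum>l<N. \<Sum>u<N. w l u * (f l)^2)"
          by (subst sum.swap) (auto intro!: sum.cong simp: sym)
        then show ?thesis using e1 by simp
      qed
      have "(\<Sum>u<N. \<Sum>l<N. w u l * (f u - f l)^2) =
          (\<Sum>u<N. \<Sum>l<N. w u l * (f u)^2) + (\<Sum>u<N. \<Sum>l<N. w u l * (f l)^2) - 2 * (\<Sum>u<N. \<Sum>l<N. w u l * f u * f l)"
        by (simp add: power2_diff algebra_simps sum.distrib sum_subtractf sum_distrib_left)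
      then show ?thesis using e1 e2 Q2 by simp
    qed
    have EN: "(\<Sum>i<k. c i ^ 2 * (8 * Ew w (A i) (B i) + 2 * Ew w (A i \<union> B i) R)) \<le> (\<Sum>u<N. \<Sum>l<N. w u l * (f u - f l)^2)"
      unfolding f_def R_def by (rule energy[OF sb]) (simp_all add: nonneg sym)
    have "(\<Sum>i<k. c i ^ 2 * (8 * Ew w (A i) (B i) + 2 * Ew w (A i \<union> B i) R)) \<le> 2 * Q"
      using EN en by simp
    moreover have "(\<Sum>i<k. c i ^ 2 * (4 * h * vol N w (A i \<union> B i))) \<le> (\<Sum>i<k. c i ^ 2 * (8 * Ew w (A i) (B i) + 2 * Ew w (A i \<union> B i) R))"
      by (intro sum_mono mult_left_mono hvol) auto
    moreover have "(\<Sum>i<k. c i ^ 2 * (4 * h * vol N w (A i \<union> B i))) = 4 * h * ipr N x x"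
      using mass[OF sb, where g="deg N w" and c=c] xx unfolding f_def vol_def by (simp add: sum_distrib_left mult_ac)
    ultimately show ?thesis by linarith
  qed
  have xpos: "ipr N x x > 0"
  proof -
    have xx: "ipr N x x = (\<Sum>i<k. c i ^ 2 * vol N w (A i \<union> B i))"
      using mass[OF sb, where g="deg N w" and c=c] unfolding ipr_def x_def f_def vol_def
      by (subst sum.cong[OF refl]) (auto simp: dg_def power2_eq_square mult_ac abs_of_nonneg dge)
    obtain i0 where i0: "i0 < k" "c i0 \<noteq> 0" using cnz by auto
    have "c i0 ^ 2 * vol N w (A i0 \<union> B i0) > 0" using i0 volpos[OF i0(1)] by simp
    moreover have "c i0 ^ 2 * vol N w (A i0 \<union> B i0) \<le> (\<Sum>i<k. c i ^ 2 * vol N w (A i \<union> B i))"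
      by (rule member_le_sum) (use i0 in \<open>auto intro!: mult_nonneg_nonneg less_imp_le[OF volpos]\<close>)
    ultimately show ?thesis using xx by linarith
  qed
  have "2 * h * ipr N x x \<le> lam * ipr N x x" using Qlow Qup by linarith
  then have "2 * h \<le> lam" using xpos by simp
  then show ?thesis unfolding lam_def ls_def h_def .
qed

end
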